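(* Let $c_1,\dots,c_t$ and $d_1,\dots,d_r$ be block columns in $C_n^*$ such that every $c_i$ consists only of unbarred letters, every $d_j$ consists only of barred letters, and $w=c_1\cdots c_t\,d_1\cdots d_r$ is a column. Let $x_i$ be the largest (rightmost) letter of $c_i$ and let $\overline{y_j}$ be the smallest (leftmost) letter of $d_j$. Then $w$ is admissible if and only if $N_z(w)\le z$ for every $z\in\{x_1,\dots,x_t,y_1,\dots,y_r\}$.
   Context: Fix $n\ge 1$ and the totally ordered alphabet $C_n=\{1<2<\cdots<n<\overline{n}<\overline{n-1}<\cdots<\overline{1}\}$; letters $1,\dots,n$ are unbarred, $\overline 1,\dots,\overline n$ barred. $C_n^*$ is the free monoid of words on $C_n$. A column is a word $x_1\cdots x_k$ with $x_1<x_2<\cdots<x_k$. For a column $u$ and $z\in\{1,\dots,n\}$, $N_z(u)$ is the number of letters $x$ of $u$ with $x\le z$ or $x\ge \overline z$. A column $u$ is admissible if it is nonempty and $N_z(u)\le z$ for all $z=1,\dots,n$. A block column is a column $x_1\cdots x_k$ in which each $x_{i+1}$ is the immediate successor of $x_i$ in the total order of $C_n$. *)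

theory Defs
  imports Main
begin

text \<open>Letters of the alphabet C_n: Unb i stands for the unbarred letter i,
  Bar i for the barred letter (overline i). A letter belongs to C_n iff its index is in {1..n}.\<close>
datatype letter = Unb nat | Bar nat

fun idx :: "letter \<Rightarrow> nat" where
  "idx (Unb i) = i"
| "idx (Bar i) = i"

fun is_barred :: "letter \<Rightarrow> bool" where
  "is_barred (Unb i) = False"
| "is_barred (Bar i) = True"

instantiation letter :: linorder
begin
fun less_eq_letter :: "letter \<Rightarrow> letter \<Rightarrow> bool" where
  "less_eq_letter (Unb i) (Unb j) = (i \<le> j)"
| "less_eq_letter (Unb i) (Bar j) = True"
| "less_eq_letter (Bar i) (Unb j) = False"
| "less_eq_letter (Bar i) (Bar j) = (j \<le> i)"
definition less_letter :: "letter \<Rightarrow> letter \<Rightarrow> bool" where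
  "less_letter x y = (x \<le> y \<and> \<not> y \<le> x)"
instance
proof
  fix x y z :: letter
  show "(x < y) = (x \<le> y \<and> \<not> y \<le> x)" by (simp add: less_letter_def)
  show "x \<le> x" by (cases x) auto
  show "x \<le> y \<Longrightarrow> y \<le> z \<Longrightarrow> x \<le> z" by (cases x; cases y; cases z) auto
  show "x \<le> y \<Longrightarrow> y \<le> x \<Longrightarrow> x = y" by (cases x; cases y) auto
  show "x \<le> y \<or> y \<le> x" by (cases x; cases y) auto
qed
end

definition in_Cn :: "nat \<Rightarrow> letter \<Rightarrow> bool" where
  "in_Cn n x = (1 \<le> idx x \<and> idx x \<le> n)"

definition is_column :: "nat \<Rightarrow> letter list \<Rightarrow> bool" where
  "is_column n u = ((\<forall>x\<in>set u. in_Cn n x) \<and> sorted_wrt (<) u)"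

definition imm_succ :: "nat \<Rightarrow> letter \<Rightarrow> letter \<Rightarrow> bool" where
  "imm_succ n a b = (in_Cn n a \<and> in_Cn n b \<and> a < b \<and> \<not> (\<exists>c. in_Cn n c \<and> a < c \<and> c < b))"

definition is_block_column :: "nat \<Rightarrow> letter list \<Rightarrow> bool" where
  "is_block_column n u = (is_column n u \<and> (\<forall>i. Suc i < length u \<longrightarrow> imm_succ n (u ! i) (u ! Suc i)))"

definition Nz :: "nat \<Rightarrow> letter list \<Rightarrow> nat" where
  "Nz z u = length (filter (\<lambda>x. x \<le> Unb z \<or> Bar z \<le> x) u)"

definition admissible :: "nat \<Rightarrow> letter list \<Rightarrow> bool" where
  "admissible n u = (is_column n u \<and> u \<noteq> [] \<and> (\<forall>z\<in>{1..n}. Nz z u \<le> z))"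

end

theory Submission
  imports Defs
begin

lemma cl_pos: "x \<in> set w \<Longrightarrow> count_list w x \<ge> 1"
  by (induction w) auto

lemma cl_zero: "x \<notin> set w \<Longrightarrow> count_list w x = 0"
  by (induction w) auto

lemma le_last: "sorted_wrt (<) (c::letter list) \<Longrightarrow> x \<in> set c \<Longrightarrow> x \<le> last c"
proof (induction c)
  case Nil thus ?case by simp
next
  case (Cons a c)
  thus ?case by (cases "c = []") (auto, meson last_in_set less_imp_le)
qed

lemma Nz_Suc:
  "Nz (Suc k) w = Nz k w + count_list w (Unb (Suc k)) + count_list w (Bar (Suc k))"
proof (induction w)
  case Nil thus ?case by (simp add: Nz_def)
next
  case (Cons x w)
  thus ?case by (cases x) (auto simp: Nz_def)
qed

lemma Nz_0:
  assumes "\<forall>x\<in>set w. in_Cn n x"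
  shows "Nz 0 w = 0"
proof -
  have "\<forall>x\<in>set w. \<not> (x \<le> Unb 0 \<or> Bar 0 \<le> x)"
  proof
    fix x assume "x \<in> set w"
    with assms have "1 \<le> idx x" by (auto simp: in_Cn_def)
    thus "\<not> (x \<le> Unb 0 \<or> Bar 0 \<le> x)" by (cases x) auto
  qed
  thus ?thesis by (simp add: Nz_def filter_empty_conv)
qed

lemma Nz_mono_run:
  assumes "a \<le> b" and "\<forall>k. a < k \<and> k \<le> b \<longrightarrow> (Unb k \<in> set w \<or> Bar k \<in> set w)"
  shows "Nz a w + b \<le> Nz b w + a"
  using assms
proof (induction b)
  case 0 thus ?case by simp
next
  case (Suc b)
  show ?case
  proof (cases "a = Suc b")
    case True thus ?thesis by simp
  next
    case False
    hence ab: "a \<le> b" using Suc.prems by simp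
    have IH: "Nz a w + b \<le> Nz b w + a" using Suc.IH ab Suc.prems(2) by auto
    have "Unb (Suc b) \<in> set w \<or> Bar (Suc b) \<in> set w" using Suc.prems(2) ab by auto
    hence "count_list w (Unb (Suc b)) + count_list w (Bar (Suc b)) \<ge> 1"
      using cl_pos by (metis add_increasing add_increasing2 zero_le)
    thus ?thesis using IH Nz_Suc[of b w] by simp
  qed
qed

lemma Nz_skip:
  assumes "Unb (Suc k) \<notin> set w" "Bar (Suc k) \<notin> set w"
  shows "Nz (Suc k) w = Nz k w"
  using assms Nz_Suc[of k w] by (simp add: cl_zero)

lemma imm_succ_Unb:
  assumes "imm_succ n (Unb a) y" "\<not> is_barred y"
  shows "y = Unb (Suc a)"
proof -
  obtain b where y: "y = Unb b" using assms(2) by (cases y) auto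
  have ab: "a < b" "b \<le> n" "1 \<le> a" using assms(1) y
    by (auto simp: imm_succ_def in_Cn_def less_letter_def)
  show ?thesis
  proof (rule ccontr)
    assume "y \<noteq> Unb (Suc a)"
    hence "Suc a < b" using ab y by auto
    hence "in_Cn n (Unb (Suc a)) \<and> Unb a < Unb (Suc a) \<and> Unb (Suc a) < y"
      using ab y by (auto simp: in_Cn_def less_letter_def)
    thus False using assms(1) by (auto simp: imm_succ_def)
  qed
qed

lemma imm_succ_Bar:
  assumes "imm_succ n (Bar a) y"
  shows "y = Bar (a - 1)"
proof -
  have "\<not> y \<le> Bar a" using assms by (auto simp: imm_succ_def less_letter_def)
  then obtain b where y: "y = Bar b" by (cases y) auto
  have ab: "b < a" "1 \<le> b" using assms(1) y
    by (auto simp: imm_succ_def in_Cn_def less_letter_def)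
  have an: "a \<le> n" using assms by (auto simp: imm_succ_def in_Cn_def)
  show ?thesis
  proof (rule ccontr)
    assume "y \<noteq> Bar (a - 1)"
    hence "b < a - 1" using ab y by auto
    hence "in_Cn n (Bar (a - 1)) \<and> Bar a < Bar (a - 1) \<and> Bar (a - 1) < y"
      using ab y an by (auto simp: in_Cn_def less_letter_def)
    thus False using assms(1) by (auto simp: imm_succ_def)
  qed
qed

lemma block_Unb_nth:
  assumes "c \<noteq> []" "is_block_column n c" "\<forall>x\<in>set c. \<not> is_barred x"
  shows "i < length c \<Longrightarrow> c ! i = Unb (idx (hd c) + i)"
proof (induction i)
  case 0
  have "\<not> is_barred (hd c)" using assms by simp
  then show ?case using assms(1) by (cases "hd c") (auto simp: hd_conv_nth)
next
  case (Suc i)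
  have "imm_succ n (c ! i) (c ! Suc i)" using assms(2) Suc.prems
    by (auto simp: is_block_column_def)
  moreover have "\<not> is_barred (c ! Suc i)" using assms(3) Suc.prems by simp
  ultimately show ?case using Suc imm_succ_Unb by auto
qed

lemma block_Bar_nth:
  assumes "d \<noteq> []" "is_block_column n d" "\<forall>x\<in>set d. is_barred x"
  shows "i < length d \<Longrightarrow> d ! i = Bar (idx (hd d) - i)"
proof (induction i)
  case 0
  have "is_barred (hd d)" using assms by simp
  then show ?case using assms(1) by (cases "hd d") (auto simp: hd_conv_nth)
next
  case (Suc i)
  have im: "imm_succ n (d ! i) (d ! Suc i)" using assms(2) Suc.prems
    by (auto simp: is_block_column_def)
  have di: "d ! i = Bar (idx (hd d) - i)" using Suc.IH Suc.prems by simp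
  have "d ! Suc i = Bar (idx (d ! i) - 1)" using imm_succ_Bar[of n "idx (hd d) - i"] im di by simp
  hence "d ! Suc i = Bar (idx (hd d) - i - 1)" using Suc.IH Suc.prems by simp
  thus ?case by simp
qed

lemma block_Unb_run:
  assumes "c \<noteq> []" "is_block_column n c" "\<forall>x\<in>set c. \<not> is_barred x"
    and "Unb z \<in> set c" "z \<le> k" "k \<le> idx (last c)"
  shows "Unb k \<in> set c"
proof -
  let ?h = "idx (hd c)"
  note nth = block_Unb_nth[OF assms(1-3)]
  obtain i where i: "i < length c" "c ! i = Unb z" using assms(4) by (auto simp: in_set_conv_nth)
  have z: "z = ?h + i" using nth[OF i(1)] i(2) by simp
  have "last c = c ! (length c - 1)" using assms(1) by (simp add: last_conv_nth)
  hence l: "idx (last c) = ?h + (length c - 1)" using nth[of "length c - 1"] assms(1) by simp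
  define j where "j = k - ?h"
  have j: "j < length c" "k = ?h + j" using z l assms(5,6) i(1) unfolding j_def by auto
  show ?thesis using nth[OF j(1)] j by (metis nth_mem)
qed

lemma block_Bar_run:
  assumes "d \<noteq> []" "is_block_column n d" "\<forall>x\<in>set d. is_barred x"
    and "Bar z \<in> set d" "z \<le> k" "k \<le> idx (hd d)"
  shows "Bar k \<in> set d"
proof -
  let ?h = "idx (hd d)"
  note nth = block_Bar_nth[OF assms(1-3)]
  obtain i where i: "i < length d" "d ! i = Bar z" using assms(4) by (auto simp: in_set_conv_nth)
  have z: "z = ?h - i" using nth[OF i(1)] i(2) by simp
  define j where "j = ?h - k"
  have j: "j < length d" "k = ?h - j" using z assms(5,6) i(1) unfolding j_def by auto
  show ?thesis using nth[OF j(1)] j by (metis nth_mem)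
qed

theorem proposition2p1:
  fixes n :: nat and cs ds :: "letter list list"
  assumes "n \<ge> 1"
    and "\<forall>c\<in>set cs. c \<noteq> [] \<and> is_block_column n c \<and> (\<forall>x\<in>set c. \<not> is_barred x)"
    and "\<forall>d\<in>set ds. d \<noteq> [] \<and> is_block_column n d \<and> (\<forall>x\<in>set d. is_barred x)"
    and "is_column n (concat cs @ concat ds)"
    and "concat cs @ concat ds \<noteq> []"
  shows "admissible n (concat cs @ concat ds) \<longleftrightarrow>
    (\<forall>z \<in> (idx \<circ> last) ` set cs \<union> (idx \<circ> hd) ` set ds.
        Nz z (concat cs @ concat ds) \<le> z)"
proof -
  let ?w = "concat cs @ concat ds"
  let ?E = "(idx \<circ> last) ` set cs \<union> (idx \<circ> hd) ` set ds"
  have inC: "\<forall>x\<in>set ?w. in_Cn n x" using assms(4) by (simp add: is_column_def)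
  have Ebound: "z \<in> {1..n}" if "z \<in> ?E" for z
  proof -
    from that obtain x where "x \<in> set ?w" "z = idx x"
      using assms(2,3) by auto (metis last_in_set, metis hd_in_set)
    thus ?thesis using inC by (auto simp: in_Cn_def)
  qed
  have key: "Nz z ?w > z \<Longrightarrow> \<exists>e\<in>?E. Nz e ?w > e" for z
  proof (induction z)
    case 0 thus ?case using Nz_0[OF inC] by simp
  next
    case (Suc z)
    show ?case
    proof (cases "Unb (Suc z) \<in> set ?w")
      case True
      then obtain c where c: "c \<in> set cs" "Unb (Suc z) \<in> set c"
        using assms(2,3) by fastforce
      note cp = assms(2)[rule_format, OF c(1)]
      let ?e = "idx (last c)"
      have le: "Suc z \<le> ?e"
      proof -
        have "sorted_wrt (<) c" using cp by (simp add: is_block_column_def is_column_def)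
        hence "Unb (Suc z) \<le> last c" using c(2) cp
          by (metis le_last)
        moreover have "\<not> is_barred (last c)" using cp by simp
        ultimately show ?thesis by (cases "last c") auto
      qed
      have "\<forall>k. Suc z < k \<and> k \<le> ?e \<longrightarrow> (Unb k \<in> set ?w \<or> Bar k \<in> set ?w)"
      proof (intro allI impI)
        fix k assume "Suc z < k \<and> k \<le> ?e"
        hence "Unb k \<in> set c" using block_Unb_run[of c n "Suc z" k] cp c by auto
        thus "Unb k \<in> set ?w \<or> Bar k \<in> set ?w" using c(1) by auto
      qed
      hence "Nz (Suc z) ?w + ?e \<le> Nz ?e ?w + Suc z" using Nz_mono_run le by blast
      hence "Nz ?e ?w > ?e" using Suc.prems by simp
      moreover have "?e \<in> ?E" using c by auto
      ultimately show ?thesis by blast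
    next
      case F1: False
      show ?thesis
      proof (cases "Bar (Suc z) \<in> set ?w")
        case True
        then obtain d where d: "d \<in> set ds" "Bar (Suc z) \<in> set d"
          using assms(2,3) F1 by fastforce
        note dp = assms(3)[rule_format, OF d(1)]
        let ?e = "idx (hd d)"
        have le: "Suc z \<le> ?e"
        proof -
          have "sorted_wrt (<) d" using dp by (simp add: is_block_column_def is_column_def)
          hence "hd d \<le> Bar (Suc z)" using d(2) dp
            by (metis list.collapse set_ConsD sorted_wrt.simps(2) less_imp_le order_refl)
          moreover have "is_barred (hd d)" using dp by simp
          ultimately show ?thesis by (cases "hd d") auto
        qed
        have "\<forall>k. Suc z < k \<and> k \<le> ?e \<longrightarrow> (Unb k \<in> set ?w \<or> Bar k \<in> set ?w)"
        proof (intro allI impI)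
          fix k assume "Suc z < k \<and> k \<le> ?e"
          hence "Bar k \<in> set d" using block_Bar_run[of d n "Suc z" k] dp d by auto
          thus "Unb k \<in> set ?w \<or> Bar k \<in> set ?w" using d(1) by auto
        qed
        hence "Nz (Suc z) ?w + ?e \<le> Nz ?e ?w + Suc z" using Nz_mono_run le by blast
        hence "Nz ?e ?w > ?e" using Suc.prems by simp
        moreover have "?e \<in> ?E" using d by auto
        ultimately show ?thesis by blast
      next
        case False
        hence "Nz (Suc z) ?w = Nz z ?w" using F1 Nz_skip by blast
        thus ?thesis using Suc by simp
      qed
    qed
  qed
  show ?thesis
  proof
    assume "admissible n ?w"
    thus "\<forall>z\<in>?E. Nz z ?w \<le> z" using Ebound by (auto simp: admissible_def)
  next
    assume H: "\<forall>z\<in>?E. Nz z ?w \<le> z"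
    have "\<forall>z\<in>{1..n}. Nz z ?w \<le> z"
      using key H by (meson not_le)
    thus "admissible n ?w" using assms(4,5) by (simp add: admissible_def)
  qed
qed

end
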